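(* Let $C$ be an $N\times N$ SPD matrix with Cholesky factor $L$ ($C=LL^T$), let $S\ge N$, and let $X^1,\dots,X^S$ be i.i.d. $\mathcal N(0,C)$. Let $\hat C=\frac1S\sum_{s=1}^SX^s(X^s)^T$ (invertible almost surely) with Cholesky factor $\hat L$. Then the preconditioned covariance $\hat L^{-1}C\hat L^{-T}$ satisfies: $\kappa(\hat L^{-1}C\hat L^{-T})$ has the same law as $\kappa(W)$ with $W\sim\mathrm{InverseWishart}(N,S)$.
   Context: For SPD $C$ with eigenvalues $\sigma_1^2\ge\cdots\ge\sigma_N^2>0$, $\kappa(C)=\big(\sum_{n=1}^N(\sigma_1/\sigma_n)^4\big)^{1/4}$. $\mathrm{Wishart}(N,S)$ is the law of $\frac1S\sum_{s=1}^SY^s(Y^s)^T$ with $Y^s$ i.i.d. $\mathcal N(0,I_N)$, and $W\sim\mathrm{InverseWishart}(N,S)$ means $W^{-1}\sim\mathrm{Wishart}(N,S)$. Preconditioning HMC sampling of $X\sim\mathcal N(0,C)$ with an invertible matrix $F$ means sampling $Z=F^{-1}X$, whose covariance is $F^{-1}CF^{-T}$. *)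

theory Defs
  imports "HOL-Analysis.Analysis" "HOL-Probability.Probability"
          "HOL-Computational_Algebra.Polynomial"
begin

definition spd :: "real^'n^'n \<Rightarrow> bool" where
  "spd C \<longleftrightarrow> transpose C = C \<and> (\<forall>x. x \<noteq> 0 \<longrightarrow> 0 < x \<bullet> (C *v x))"

definition charpoly :: "real^'n^'n \<Rightarrow> real poly" where
  "charpoly C = det (\<chi> i j. (if i = j then [:0, 1:] else 0) - [:C $ i $ j:])"

definition eigenvalues :: "real^'n^'n \<Rightarrow> real multiset" where
  "eigenvalues C = proots (charpoly C)"

text \<open>kappa(C) = (sum_n (sigma_1/sigma_n)^4)^(1/4), where sigma_n^2 are the
  eigenvalues of C and sigma_1^2 the largest one; (sigma_1/sigma_n)^4 = (sigma_1^2/sigma_n^2)^2.\<close>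
definition kappa :: "real^'n^'n \<Rightarrow> real" where
  "kappa C = (\<Sum>e\<in>#eigenvalues C. (Max (set_mset (eigenvalues C)) / e)^2) powr (1/4)"

definition gaussian_density :: "real^'n^'n \<Rightarrow> real^'n \<Rightarrow> real" where
  "gaussian_density C x =
     (2 * pi) powr (- real CARD('n) / 2) * det C powr (- 1 / 2)
     * exp (- (x \<bullet> (matrix_inv C *v x)) / 2)"

definition gaussian :: "real^'n^'n \<Rightarrow> (real^'n) measure" where
  "gaussian C = density lborel (\<lambda>x. ennreal (gaussian_density C x))"

text \<open>Law of S i.i.d. samples X^1..X^S (indexed 0..S-1).\<close>
definition iid_sample :: "nat \<Rightarrow> real^'n^'n \<Rightarrow> (nat \<Rightarrow> real^'n) measure" where
  "iid_sample S C = PiM {..<S} (\<lambda>_. gaussian C)"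

definition outer :: "real^'n \<Rightarrow> real^'n^'n" where
  "outer v = (\<chi> i j. v $ i * v $ j)"

definition emp_cov :: "nat \<Rightarrow> (nat \<Rightarrow> real^'n) \<Rightarrow> real^'n^'n" where
  "emp_cov S X = (1 / real S) *\<^sub>R (\<Sum>s<S. outer (X s))"

definition cholesky :: "real^('n::{finite,wellorder})^('n::{finite,wellorder}) \<Rightarrow> real^('n::{finite,wellorder})^('n::{finite,wellorder})" where
  "cholesky C = (THE L. (\<forall>i j. i < j \<longrightarrow> L $ i $ j = 0) \<and> (\<forall>i. 0 < L $ i $ i)
                      \<and> L ** transpose L = C)"

definition precond :: "real^'n^'n \<Rightarrow> real^'n^'n \<Rightarrow> real^'n^'n" where
  "precond F C = matrix_inv F ** C ** transpose (matrix_inv F)"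

end

theory Submission
  imports Defs
begin
lemma pC_sum: "finite S \<Longrightarrow> [:sum f S:] = (\<Sum>x\<in>S. [:f x:])"
  by (induct rule: finite_induct) (auto, metis add_pCons add.right_neutral)

lemma mm_diff_l: "(A::'a::comm_ring_1^'n^'m) ** (B - C) = A ** B - A ** C"
  by (simp add: matrix_matrix_mult_def vec_eq_iff sum_subtractf algebra_simps)
lemma mm_diff_r: "((B::'a::comm_ring_1^'n^'m) - C) ** A = B ** A - C ** A"
  by (simp add: matrix_matrix_mult_def vec_eq_iff sum_subtractf algebra_simps)

definition liftp :: "real^'n^'n \<Rightarrow> real poly^'n^'n" where
  "liftp A = (\<chi> i j. [:A$i$j:])"

definition Xp :: "real poly^'n^'n" where
  "Xp = (\<chi> i j. if i = j then [:0, 1:] else 0)"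

lemma charpoly_alt: "charpoly C = det (Xp - liftp C)"
  unfolding charpoly_def Xp_def liftp_def
  by (rule arg_cong[where f=det]) (simp add: vec_eq_iff)

lemma liftp_mult: "liftp (A ** B) = liftp A ** liftp B"
  unfolding liftp_def matrix_matrix_mult_def
  by (simp add: vec_eq_iff pC_sum ac_simps)

lemma liftp_one: "liftp (mat 1) = mat 1"
  unfolding liftp_def by (simp add: vec_eq_iff mat_def)

lemma Xp_comm: "Xp ** liftp A = liftp A ** Xp"
proof -
  have a: "(\<Sum>k\<in>UNIV. (if i = k then [:0, 1:] else 0) * [:A $ k $ j:]) = [:0, 1:] * [:A $ i $ j:]" for i j
  proof -
    have "(\<Sum>k\<in>UNIV. (if i = k then [:0, 1:] else 0) * [:A $ k $ j:]) = (\<Sum>k\<in>UNIV. (if i = k then [:0, 1:] * [:A $ k $ j:] else 0))"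
      by (rule sum.cong) auto
    then show ?thesis by (simp only:) simp
  qed
  have b: "(\<Sum>k\<in>UNIV. [:A $ i $ k:] * (if k = j then [:0, 1:] else 0)) = [:0, 1:] * [:A $ i $ j:]" for i j
    by (simp add: if_distrib[of "\<lambda>x. _ * x"] mult.commute cong: if_cong)
  show ?thesis
    unfolding Xp_def liftp_def matrix_matrix_mult_def
    by (simp add: vec_eq_iff a b del: pCons_0_0 mult_pCons_left mult_pCons_right)
qed

lemma liftp_diff: "liftp (A - B) = liftp A - liftp B"
  unfolding liftp_def by (simp add: vec_eq_iff)

lemma charpoly_similar:
  fixes P A :: "real^'n^'n"
  assumes "Q ** P = mat 1"
  shows "charpoly (Q ** A ** P) = charpoly A"
proof -
  have "Xp - liftp (Q ** A ** P) = liftp Q ** (Xp - liftp A) ** liftp P"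
  proof -
    have "liftp Q ** Xp ** liftp P = Xp"
      by (metis Xp_comm assms liftp_mult liftp_one matrix_mul_assoc matrix_mul_rid)
    then show ?thesis
      by (simp add: mm_diff_l mm_diff_r liftp_mult matrix_mul_assoc)
  qed
  then have "charpoly (Q ** A ** P) = det (liftp Q) * det (Xp - liftp A) * det (liftp P)"
    by (simp add: charpoly_alt det_mul)
  also have "\<dots> = det (liftp Q ** liftp P) * det (Xp - liftp A)"
    by (simp add: det_mul)
  also have "\<dots> = det (Xp - liftp A)"
    by (simp add: assms liftp_one flip: liftp_mult)
  finally show ?thesis by (simp add: charpoly_alt)
qed

lemma kappa_similar:
  fixes P A :: "real^'n^'n"
  assumes "Q ** P = mat 1"
  shows "kappa (Q ** A ** P) = kappa A"
  unfolding kappa_def eigenvalues_def charpoly_similar[OF assms] ..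

definition cholP :: "real^('n::{finite,wellorder})^('n::{finite,wellorder}) \<Rightarrow> real^('n::{finite,wellorder})^('n::{finite,wellorder}) \<Rightarrow> bool" where
 "cholP C L \<longleftrightarrow> (\<forall>i j. i < j \<longrightarrow> L $ i $ j = 0) \<and> (\<forall>i. 0 < L $ i $ i) \<and> L ** transpose L = C"

lemma cholesky_alt: "cholesky C = (THE L. cholP C L)"
  unfolding cholesky_def cholP_def ..

lemma sum_only:
  fixes f :: "'a::finite \<Rightarrow> real"
  assumes "\<And>k. k \<noteq> j \<Longrightarrow> f k = 0"
  shows "(\<Sum>k\<in>UNIV. f k) = f j"
proof -
  have "(\<Sum>k\<in>UNIV. f k) = f j + (\<Sum>k\<in>UNIV - {j}. f k)"
    by (simp add: sum.remove)
  also have "(\<Sum>k\<in>UNIV - {j}. f k) = 0" using assms by (intro sum.neutral) auto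
  finally show ?thesis by simp
qed

lemma sum_split_at:
  fixes f :: "'n::{finite,wellorder} \<Rightarrow> real"
  assumes "\<And>k. j < k \<Longrightarrow> f k = 0"
  shows "(\<Sum>k\<in>UNIV. f k) = (\<Sum>k\<in>{..<j}. f k) + f j"
proof -
  have "(\<Sum>k\<in>UNIV. f k) = (\<Sum>k\<in>insert j {..<j}. f k)"
    using assms by (intro sum.mono_neutral_right) (auto, metis linorder_neqE)
  also have "\<dots> = (\<Sum>k\<in>{..<j}. f k) + f j" by simp
  finally show ?thesis .
qed

lemma chol_unique:
  fixes L1 L2 :: "real^('n::{finite,wellorder})^('n::{finite,wellorder})"
  assumes h1: "cholP C L1" and h2: "cholP C L2"
  shows "L1 = L2"
proof -
  have lo1: "\<And>i j. i < j \<Longrightarrow> L1$i$j = 0" and p1: "\<And>i. 0 < L1$i$i"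
    and lo2: "\<And>i j. i < j \<Longrightarrow> L2$i$j = 0" and p2: "\<And>i. 0 < L2$i$i"
    and e: "L1 ** transpose L1 = L2 ** transpose L2"
    using h1 h2 unfolding cholP_def by auto
  have "\<forall>i. L1$i$j = L2$i$j" for j
  proof (induction j rule: less_induct)
    case (less j)
    have E: "L1$i$j * L1$j$j = L2$i$j * L2$j$j" for i
    proof -
      have "(L1 ** transpose L1)$i$j = (L2 ** transpose L2)$i$j" using e by simp
      then have "(\<Sum>k\<in>UNIV. L1$i$k * L1$j$k) = (\<Sum>k\<in>UNIV. L2$i$k * L2$j$k)"
        by (simp add: matrix_matrix_mult_def transpose_def)
      moreover have "(\<Sum>k\<in>UNIV. L1$i$k * L1$j$k) = (\<Sum>k\<in>{..<j}. L1$i$k * L1$j$k) + L1$i$j * L1$j$j"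
        by (rule sum_split_at) (simp add: lo1)
      moreover have "(\<Sum>k\<in>UNIV. L2$i$k * L2$j$k) = (\<Sum>k\<in>{..<j}. L2$i$k * L2$j$k) + L2$i$j * L2$j$j"
        by (rule sum_split_at) (simp add: lo2)
      moreover have "(\<Sum>k\<in>{..<j}. L1$i$k * L1$j$k) = (\<Sum>k\<in>{..<j}. L2$i$k * L2$j$k)"
        using less by (intro sum.cong) auto
      ultimately show ?thesis by simp
    qed
    have "L1$j$j = L2$j$j"
    proof -
      have "(L1$j$j)^2 = (L2$j$j)^2" using E[of j] by (simp add: power2_eq_square)
      then show ?thesis using p1[of j] p2[of j]
        by (metis less_le power2_eq_iff_nonneg)
    qed
    then show ?case using E p1 by (metis mult_right_cancel less_irrefl)
  qed
  then show ?thesis by (simp add: vec_eq_iff)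
qed

lemma spd_sym_inner:
  fixes A :: "real^'n^'n"
  assumes "transpose A = A"
  shows "x \<bullet> (A *v y) = (A *v x) \<bullet> y"
  by (metis assms dot_lmul_matrix transpose_matrix_vector)

lemma chol_u:
  fixes A :: "real^('n::{finite,wellorder})^('n::{finite,wellorder})"
  assumes "spd A"
  shows "\<exists>u. u$j = 1 \<and> (\<forall>i. j < i \<longrightarrow> u$i = 0) \<and> (\<forall>i. i < j \<longrightarrow> (A *v u)$i = 0)"
proof -
  define Pm where "Pm = ((\<chi> i k. if i = k \<and> i < j then 1 else 0) :: real^_^_)"
  have Pv: "(Pm *v x)$i = (if i < j then x$i else 0)" for x i
  proof -
    have "(Pm *v x)$i = (\<Sum>k\<in>UNIV. (if i = k \<and> i < j then 1 else 0) * x$k)"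
      by (simp add: Pm_def matrix_vector_mult_def)
    also have "\<dots> = (if i = i \<and> i < j then 1 else 0) * x$i"
      by (rule sum_only) auto
    finally show ?thesis by simp
  qed
  define M where "M = Pm ** A ** Pm + (mat 1 - Pm)"
  have Mv: "(M *v x)$i = (if i < j then (A *v (Pm *v x))$i else x$i)" for x i
    by (simp add: M_def matrix_vector_mult_add_rdistrib matrix_vector_mult_diff_rdistrib
        Pv flip: matrix_vector_mul_assoc)
  have "\<forall>x. M *v x = 0 \<longrightarrow> x = 0"
  proof (intro allI impI)
    fix x assume h: "M *v x = 0"
    have xz: "x$i = 0" if "\<not> i < j" for i using arg_cong[OF h, of "\<lambda>v. v$i"] that by (simp add: Mv)
    have "Pm *v x = x" by (simp add: vec_eq_iff Pv xz)
    then have az: "(A *v x)$i = 0" if "i < j" for i using arg_cong[OF h, of "\<lambda>v. v$i"] that by (simp add: Mv)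
    have "x \<bullet> (A *v x) = (\<Sum>i\<in>UNIV. x$i * (A *v x)$i)" by (simp add: inner_vec_def)
    also have "\<dots> = 0" by (rule sum.neutral) (metis az xz mult_zero_left mult_zero_right)
    finally show "x = 0" using assms unfolding spd_def by (metis less_irrefl)
  qed
  then obtain B where "B ** M = mat 1" using matrix_left_invertible_ker by blast
  then have MB: "M ** B = mat 1" using matrix_left_right_inverse by blast
  define y where "y = Pm *v (A *v axis j 1)"
  define x where "x = B *v y"
  have Mx: "M *v x = y" unfolding x_def by (simp add: matrix_vector_mul_assoc MB)
  have xz: "x$i = 0" if "\<not> i < j" for i
    using arg_cong[OF Mx, of "\<lambda>v. v$i"] that by (simp add: Mv y_def Pv)
  have Px: "Pm *v x = x" by (simp add: vec_eq_iff Pv xz)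
  have ax: "(A *v x)$i = (A *v axis j 1)$i" if "i < j" for i
    using arg_cong[OF Mx, of "\<lambda>v. v$i"] that by (simp add: Mv y_def Pv Px)
  define u where "u = axis j 1 - x"
  have "u$j = 1" using xz[of j] by (simp add: u_def axis_def)
  moreover have "\<forall>i. j < i \<longrightarrow> u$i = 0" using xz by (auto simp: u_def axis_def)
  moreover have "\<forall>i. i < j \<longrightarrow> (A *v u)$i = 0"
    using ax by (simp add: u_def matrix_vector_mult_diff_distrib)
  ultimately show ?thesis by blast
qed

lemma chol_exists:
  fixes A :: "real^('n::{finite,wellorder})^('n::{finite,wellorder})"
  assumes "spd A"
  shows "\<exists>L. cholP A L"
proof -
  have sym: "transpose A = A" using assms by (simp add: spd_def)
  have "\<forall>j. \<exists>u. u$j = 1 \<and> (\<forall>i. j < i \<longrightarrow> u$i = 0) \<and> (\<forall>i. i < j \<longrightarrow> (A *v u)$i = 0)"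
    using chol_u[OF assms] by blast
  then have "\<exists>U. \<forall>j. U j$j = 1 \<and> (\<forall>i. j < i \<longrightarrow> U j$i = 0) \<and> (\<forall>i. i < j \<longrightarrow> (A *v U j)$i = 0)"
    by (rule choice)
  then obtain U where U: "\<forall>j. U j$j = 1 \<and> (\<forall>i. j < i \<longrightarrow> U j$i = 0) \<and> (\<forall>i. i < j \<longrightarrow> (A *v U j)$i = 0)"
    by blast
  have U1: "\<And>j. U j $ j = 1" and U2: "\<And>i j. j < i \<Longrightarrow> U j $ i = 0"
    and U3: "\<And>i j. i < j \<Longrightarrow> (A *v U j) $ i = 0" using U by auto
  define D where "D j = U j \<bullet> (A *v U j)" for j
  have Dpos: "0 < D j" for j
  proof -
    have "U j \<noteq> 0" using U1[of j] by auto
    then show ?thesis using assms unfolding spd_def D_def by blast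
  qed
  have DA: "D j = (A *v U j)$j" for j
  proof -
    have "D j = (\<Sum>i\<in>UNIV. U j $ i * (A *v U j)$i)" by (simp add: D_def inner_vec_def)
    also have "\<dots> = U j $ j * (A *v U j)$j"
    proof (rule sum_only)
      fix k assume "k \<noteq> j"
      then show "U j $ k * (A *v U j)$k = 0" using U2[of j k] U3[of k j] by (auto simp: neq_iff)
    qed
    finally show ?thesis by (simp add: U1)
  qed
  have orth0: "U i \<bullet> (A *v U j) = 0" if "i < j" for i j
  proof -
    have "U i \<bullet> (A *v U j) = (\<Sum>k\<in>UNIV. U i $ k * (A *v U j)$k)" by (simp add: inner_vec_def)
    also have "\<dots> = 0"
    proof (rule sum.neutral, rule ballI)
      fix k
      show "U i $ k * (A *v U j)$k = 0"
      proof (cases "k < j")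
        case True then show ?thesis using U3[of k j] by simp
      next
        case False then have "i < k" using that by (simp add: not_less less_le_trans)
        then show ?thesis using U2[of i k] by simp
      qed
    qed
    finally show ?thesis .
  qed
  have orth: "U i \<bullet> (A *v U j) = (if i = j then D j else 0)" for i j
  proof (cases i j rule: linorder_cases)
    case greater
    have "U i \<bullet> (A *v U j) = U j \<bullet> (A *v U i)"
      using spd_sym_inner[OF sym, of "U i" "U j"] by (simp add: inner_commute)
    then show ?thesis using orth0[OF greater] greater by simp
  qed (auto simp: orth0 D_def)
  define Um where "Um = ((\<chi> i j. U j $ i) :: real^_^_)"
  define K where "K = A ** Um"
  have Kij: "K$i$j = (A *v U j)$i" for i j
    by (simp add: K_def Um_def matrix_matrix_mult_def matrix_vector_mult_def)
  have UKe: "(transpose Um ** K)$i$j = U i \<bullet> (A *v U j)" for i j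
    by (simp add: matrix_matrix_mult_def Kij Um_def transpose_def inner_vec_def)
  have UK: "transpose Um ** K = (\<chi> i j. if i = j then D j else 0)"
    unfolding vec_eq_iff by (auto simp: UKe orth simp del: vec_lambda_beta) (simp_all add: orth)
  define Dinv where "Dinv = ((\<chi> i j. if i = j then 1 / D i else 0) :: real^_^_)"
  define Ds where "Ds = ((\<chi> i j. if i = j then 1 / sqrt (D i) else 0) :: real^_^_)"
  have "transpose Um ** (K ** Dinv) = mat 1"
  proof -
    have "transpose Um ** (K ** Dinv) = (\<chi> i j. if i = j then D j else 0) ** Dinv"
      by (simp add: matrix_mul_assoc UK)
    also have "\<dots> = mat 1"
    proof -
      have "(\<Sum>k\<in>UNIV. (if i = k then D k else 0) * (if k = j then 1 / D k else 0)) = (if i = j then 1 else 0)" for i j :: 'n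
      proof -
        have "(\<Sum>k\<in>UNIV. (if i = k then D k else 0) * (if k = j then 1 / D k else 0)) = (if i = i then D i else 0) * (if i = j then 1 / D i else 0)"
          by (rule sum_only) auto
        then show ?thesis using Dpos[of i] by (cases "i = j") auto
      qed
      then show ?thesis by (simp add: vec_eq_iff matrix_matrix_mult_def Dinv_def mat_def)
    qed
    finally show ?thesis .
  qed
  then have inv: "K ** Dinv ** transpose Um = mat 1"
    using matrix_left_right_inverse by (metis matrix_mul_assoc)
  have DsDs: "Ds ** transpose Ds = Dinv"
  proof -
    have "(\<Sum>k\<in>UNIV. (if i = k then 1 / sqrt (D i) else 0) * (if j = k then 1 / sqrt (D j) else 0)) = (if i = j then 1 / D i else 0)" for i j :: 'n
    proof -
      have "(\<Sum>k\<in>UNIV. (if i = k then 1 / sqrt (D i) else 0) * (if j = k then 1 / sqrt (D j) else 0)) = (if i = i then 1 / sqrt (D i) else 0) * (if j = i then 1 / sqrt (D j) else 0)"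
        by (rule sum_only) auto
      then show ?thesis using Dpos[of i] by (cases "i = j") (auto simp: real_sqrt_mult[symmetric])
    qed
    then show ?thesis by (simp add: vec_eq_iff matrix_matrix_mult_def Dinv_def Ds_def transpose_def)
  qed
  define L where "L = K ** Ds"
  have Lij: "L$i$j = K$i$j / sqrt (D j)" for i j
  proof -
    have "L$i$j = (\<Sum>k\<in>UNIV. K$i$k * (if k = j then 1 / sqrt (D k) else 0))"
      by (simp add: L_def Ds_def matrix_matrix_mult_def)
    also have "\<dots> = K$i$j * (if j = j then 1 / sqrt (D j) else 0)" by (rule sum_only) auto
    finally show ?thesis by simp
  qed
  have "L ** transpose L = A"
  proof -
    have tK: "transpose K = transpose Um ** A" by (simp add: K_def matrix_transpose_mul sym)
    have "L ** transpose L = K ** (Ds ** transpose Ds) ** transpose K"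
      by (simp add: L_def matrix_transpose_mul matrix_mul_assoc)
    also have "\<dots> = (K ** Dinv ** transpose Um) ** A" by (simp add: DsDs tK matrix_mul_assoc)
    finally show ?thesis by (simp add: inv)
  qed
  moreover have "\<forall>i j. i < j \<longrightarrow> L$i$j = 0" by (simp add: Lij Kij U3)
  moreover have "\<forall>i. 0 < L$i$i"
  proof
    fix i
    have "L$i$i = D i / sqrt (D i)" by (simp add: Lij Kij DA)
    also have "\<dots> = sqrt (D i)" using Dpos[of i] by (metis real_div_sqrt less_imp_le)
    finally show "0 < L$i$i" using Dpos[of i] by simp
  qed
  ultimately show ?thesis unfolding cholP_def by blast
qed

lemma cholesky_spd:
  fixes A :: "real^('n::{finite,wellorder})^('n::{finite,wellorder})"
  assumes "spd A"
  shows "cholP A (cholesky A)"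
proof -
  obtain L where "cholP A L" using chol_exists[OF assms] by blast
  then show ?thesis unfolding cholesky_alt by (metis chol_unique theI)
qed

lemma minv_eq:
  fixes A B :: "real^'n^'n"
  assumes "A ** B = mat 1"
  shows "matrix_inv A = B"
proof -
  have BA: "B ** A = mat 1" using assms matrix_left_right_inverse by blast
  let ?B = "matrix_inv A"
  have "A ** ?B = mat 1 \<and> ?B ** A = mat 1"
    unfolding matrix_inv_def by (rule someI[of _ B]) (simp add: assms BA)
  then have "?B ** A = mat 1" by blast
  then have "?B = ?B ** (A ** B)" by (simp add: assms)
  also have "\<dots> = B" by (simp add: matrix_mul_assoc \<open>?B ** A = mat 1\<close>)
  finally show ?thesis .
qed

lemma sum_mv: "finite A \<Longrightarrow> (sum M A) *v (z::real^'n) = (\<Sum>s\<in>A. M s *v z)"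
  by (induct rule: finite_induct) (auto simp: matrix_vector_mult_add_rdistrib)

lemma outer_mv: "outer v *v z = (v \<bullet> z) *\<^sub>R v"
  by (simp add: vec_eq_iff outer_def matrix_vector_mult_def inner_vec_def sum_distrib_left ac_simps)

lemma ec_mv: "emp_cov S Y *v z = (1 / real S) *\<^sub>R (\<Sum>s<S. (Y s \<bullet> z) *\<^sub>R Y s)"
  unfolding emp_cov_def
  by (simp add: sum_mv outer_mv flip: scaleR_matrix_vector_assoc)

lemma ec_entry: "emp_cov S Y $ i $ j = (1 / real S) * (\<Sum>s<S. Y s $ i * Y s $ j)"
  by (simp add: emp_cov_def outer_def sum_component)

lemma ec_sym: "transpose (emp_cov S Y) = emp_cov S Y"
  by (simp add: vec_eq_iff transpose_def ec_entry mult.commute)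

lemma ec_quad: "z \<bullet> (emp_cov S Y *v z) = (1 / real S) * (\<Sum>s<S. (Y s \<bullet> z)^2)"
  by (simp add: ec_mv inner_sum_right power2_eq_square inner_commute)

lemma ec_congr:
  fixes F :: "real^'n^'n"
  shows "emp_cov S (\<lambda>s. F *v Y s) = F ** emp_cov S Y ** transpose F"
proof -
  have "emp_cov S (\<lambda>s. F *v Y s) *v z = (F ** emp_cov S Y ** transpose F) *v z" for z
  proof -
    have "(F ** emp_cov S Y ** transpose F) *v z = F *v (emp_cov S Y *v (transpose F *v z))"
      by (metis matrix_vector_mul_assoc)
    also have "\<dots> = (1 / real S) *\<^sub>R (\<Sum>s<S. (Y s \<bullet> (transpose F *v z)) *\<^sub>R (F *v Y s))"
      by (simp add: ec_mv linear_sum[OF matrix_vector_mul_linear] linear_scale[OF matrix_vector_mul_linear]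
          matrix_vector_mult_scaleR)
    also have "\<dots> = emp_cov S (\<lambda>s. F *v Y s) *v z"
    proof -
      have "Y s \<bullet> (transpose F *v z) = (F *v Y s) \<bullet> z" for s
        by (metis dot_lmul_matrix vector_transpose_matrix)
      then show ?thesis by (simp add: ec_mv)
    qed
    finally show ?thesis by simp
  qed
  then show ?thesis by (simp add: matrix_eq)
qed

lemma ec_spd:
  fixes Y :: "nat \<Rightarrow> real^'n"
  assumes "det (emp_cov S Y) \<noteq> 0"
  shows "spd (emp_cov S Y)"
  unfolding spd_def
proof (intro conjI allI impI)
  show "transpose (emp_cov S Y) = emp_cov S Y" by (rule ec_sym)
  fix x :: "real^'n" assume x: "x \<noteq> 0"
  have ge: "0 \<le> x \<bullet> (emp_cov S Y *v x)" by (simp add: ec_quad sum_nonneg)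
  have "x \<bullet> (emp_cov S Y *v x) \<noteq> 0"
  proof
    assume h: "x \<bullet> (emp_cov S Y *v x) = 0"
    have Spos: "S \<noteq> 0"
    proof
      assume "S = 0"
      then have "emp_cov S Y = mat 0" by (simp add: emp_cov_def vec_eq_iff mat_def)
      then have "det (emp_cov S Y) = 0" by (simp only: det_0)
      then show False using assms by simp
    qed
    then have "(\<Sum>s<S. (Y s \<bullet> x)^2) = 0" using h by (simp add: ec_quad)
    then have "\<forall>s\<in>{..<S}. (Y s \<bullet> x)^2 = 0" by (subst sum_nonneg_eq_0_iff[symmetric]) auto
    then have "emp_cov S Y *v x = 0" by (simp add: ec_mv)
    moreover obtain B where "B ** emp_cov S Y = mat 1"
      using assms invertible_det_nz invertible_left_inverse by blast
    ultimately have "x = 0"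
      by (metis matrix_vector_mul_assoc matrix_vector_mul_lid matrix_vector_mult_0_right)
    then show False using x by simp
  qed
  with ge show "0 < x \<bullet> (emp_cov S Y *v x)" by simp
qed

lemma cancel_r: "(A::real^'n^'n) ** B = mat 1 \<Longrightarrow> X ** A ** B = X"
  by (metis matrix_mul_assoc matrix_mul_rid)

lemma transpose_one: "(A::real^'n^'n) ** B = mat 1 \<Longrightarrow> transpose B ** transpose A = mat 1"
  by (metis matrix_transpose_mul transpose_mat)

lemma pointwise:
  fixes C F Fi :: "real^('n::{finite,wellorder})^('n::{finite,wellorder})"
  assumes CF: "C = F ** transpose F" and FFi: "F ** Fi = mat 1"
    and det: "det (emp_cov S Y) \<noteq> 0"
  shows "kappa (precond (cholesky (emp_cov S (\<lambda>s. F *v Y s))) C) = kappa (matrix_inv (emp_cov S Y))"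
proof -
  define Yh where "Yh = emp_cov S Y"
  define Ch where "Ch = emp_cov S (\<lambda>s. F *v Y s)"
  have FiF: "Fi ** F = mat 1" using FFi matrix_left_right_inverse by blast
  have Ch_eq: "Ch = F ** Yh ** transpose F" unfolding Ch_def Yh_def by (rule ec_congr)
  have spdY: "spd Yh" unfolding Yh_def by (rule ec_spd[OF det])
  have spdC: "spd Ch"
    unfolding spd_def
  proof (intro conjI allI impI)
    show "transpose Ch = Ch"
      using spdY by (simp add: Ch_eq matrix_transpose_mul matrix_mul_assoc spd_def)
    fix x :: "real^('n::{finite,wellorder})" assume x: "x \<noteq> 0"
    have "transpose F *v x \<noteq> 0"
    proof
      assume "transpose F *v x = 0"
      then have "(transpose Fi ** transpose F) *v x = 0" by (metis matrix_vector_mul_assoc matrix_vector_mult_0_right)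
      then show False using x transpose_one[OF FFi] by simp
    qed
    then have "0 < (transpose F *v x) \<bullet> (Yh *v (transpose F *v x))"
      using spdY unfolding spd_def by blast
    also have "(transpose F *v x) \<bullet> (Yh *v (transpose F *v x)) = x \<bullet> (Ch *v x)"
      by (metis Ch_eq dot_lmul_matrix matrix_vector_mul_assoc transpose_matrix_vector)
    finally show "0 < x \<bullet> (Ch *v x)" .
  qed
  have cP: "cholP Ch (cholesky Ch)" by (rule cholesky_spd[OF spdC])
  define Lh where "Lh = cholesky Ch"
  have LL: "Lh ** transpose Lh = Ch" using cP unfolding cholP_def Lh_def by blast
  have "det Lh \<noteq> 0"
  proof
    assume "det Lh = 0"
    then have "det Ch = 0" using LL det_mul by (metis mult_zero_left)
    moreover have "det F \<noteq> 0" using FFi det_mul det_I by (metis mult_zero_left zero_neq_one)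
    ultimately show False using det Ch_eq det_mul unfolding Yh_def by (metis det_transpose mult_eq_0_iff)
  qed
  then obtain Li where LLi: "Lh ** Li = mat 1"
    using invertible_det_nz invertible_right_inverse by blast
  have LiL: "Li ** Lh = mat 1" using LLi matrix_left_right_inverse by blast
  have mi: "matrix_inv Lh = Li" by (rule minv_eq[OF LLi])
  define M where "M = Li ** F"
  define Q where "Q = Fi ** Lh"
  have QM: "Q ** M = mat 1"
    by (simp add: Q_def M_def matrix_mul_assoc cancel_r[OF LLi] FiF)
  have pre: "precond Lh C = M ** transpose M"
    by (simp add: precond_def mi CF M_def matrix_transpose_mul matrix_mul_assoc)
  have Yh_eq: "Yh = Fi ** Lh ** transpose Lh ** transpose Fi"
  proof -
    have "Fi ** Ch ** transpose Fi = Fi ** F ** Yh ** (transpose F ** transpose Fi)"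
      by (simp add: Ch_eq matrix_mul_assoc)
    also have "\<dots> = Yh" using FiF transpose_one[OF FiF] by simp
    finally show ?thesis by (simp add: LL[symmetric] matrix_mul_assoc)
  qed
  have "Yh ** (transpose M ** M) = mat 1"
  proof -
    have "Yh ** (transpose M ** M) = Fi ** Lh ** (transpose Lh ** transpose Fi ** transpose F ** transpose Li) ** Li ** F"
      by (simp add: Yh_eq M_def matrix_transpose_mul matrix_mul_assoc)
    also have "transpose Lh ** transpose Fi ** transpose F ** transpose Li = mat 1"
      using transpose_one[OF FFi] transpose_one[OF LiL] by (simp add: cancel_r)
    finally show ?thesis using LLi FiF by (simp add: cancel_r)
  qed
  then have miY: "matrix_inv Yh = transpose M ** M" by (rule minv_eq)
  have "transpose M ** M = Q ** (M ** transpose M) ** M"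
    using QM by (simp add: matrix_mul_assoc)
  then have "kappa (matrix_inv Yh) = kappa (M ** transpose M)"
    using kappa_similar[OF QM] miY by simp
  then show ?thesis using pre by (simp add: Lh_def Ch_def Yh_def)
qed

lemma mv_borel: "(\<lambda>x. (F::real^'m^'n) *v x) \<in> borel_measurable borel"
  by (intro borel_measurable_continuous_onI linear_continuous_on matrix_vector_mul_bounded_linear)

lemma lborel_lin_aux:
  fixes F Fi :: "real^('n::{finite,wellorder})^('n::{finite,wellorder})"
  assumes FFi: "F ** Fi = mat 1"
  shows "lborel = density (distr lborel borel (\<lambda>x. F *v x)) (\<lambda>_. ennreal \<bar>det F\<bar>)"
proof (rule lborel_eqI)
  have FiF: "Fi ** F = mat 1" using FFi matrix_left_right_inverse by blast
  have dd: "\<bar>det F\<bar> * \<bar>det Fi\<bar> = 1"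
    using arg_cong[OF FFi, of det] by (simp add: det_mul abs_mult[symmetric])
  fix l u :: "(real, 'n) vec" assume le: "\<And>b. b \<in> Basis \<Longrightarrow> l \<bullet> b \<le> u \<bullet> b"
  have pre: "(\<lambda>x. F *v x) -` box l u = (\<lambda>x. Fi *v x) ` box l u"
  proof (intro set_eqI iffI)
    fix x assume "x \<in> (\<lambda>x. F *v x) -` box l u"
    moreover have "x = Fi *v (F *v x)" by (simp add: matrix_vector_mul_assoc FiF)
    ultimately show "x \<in> (\<lambda>x. Fi *v x) ` box l u" by blast
  next
    fix x assume "x \<in> (\<lambda>x. Fi *v x) ` box l u"
    then show "x \<in> (\<lambda>x. F *v x) -` box l u" by (auto simp: matrix_vector_mul_assoc FFi)
  qed
  have bor: "(\<lambda>x. Fi *v x) ` box l u \<in> sets borel"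
    unfolding pre[symmetric] using mv_borel[of F] by (simp add: measurable_sets_borel)
  have lm: "(\<lambda>x. Fi *v x) ` box l u \<in> lmeasurable"
    by (rule measurable_linear_image) (auto intro: matrix_vector_mul_linear)
  have "emeasure lborel ((\<lambda>x. Fi *v x) ` box l u) = emeasure lebesgue ((\<lambda>x. Fi *v x) ` box l u)"
    using bor by simp
  also have "\<dots> = ennreal (measure lebesgue ((\<lambda>x. Fi *v x) ` box l u))"
    using lm by (simp add: emeasure_eq_measure2)
  also have "\<dots> = ennreal (\<bar>det Fi\<bar> * measure lebesgue (box l u))"
    using measure_linear_image[of "\<lambda>x. Fi *v x" "box l u"]
    by (simp add: matrix_vector_mul_linear matrix_of_matrix_vector_mul)
  finally have e1: "emeasure lborel ((\<lambda>x. Fi *v x) ` box l u) = ennreal (\<bar>det Fi\<bar> * measure lborel (box l u))"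
    by simp
  have "emeasure (density (distr lborel borel (\<lambda>x. F *v x)) (\<lambda>_. ennreal \<bar>det F\<bar>)) (box l u)
      = ennreal \<bar>det F\<bar> * emeasure lborel ((\<lambda>x. F *v x) -` box l u)"
    by (simp add: emeasure_density_const emeasure_distr mv_borel)
  also have "\<dots> = ennreal (measure lborel (box l u))"
    by (simp add: pre e1 ennreal_mult'[symmetric] mult.assoc[symmetric] dd)
  also have "\<dots> = (\<Prod>b\<in>Basis. (u - l) \<bullet> b)"
    using le by (simp add: measure_lborel_box_eq)
  finally show "emeasure (density (distr lborel borel (\<lambda>x. F *v x)) (\<lambda>_. ennreal \<bar>det F\<bar>)) (box l u) = (\<Prod>b\<in>Basis. (u - l) \<bullet> b)" .
qed simp

lemma lborel_lin:
  fixes F Fi :: "real^('n::{finite,wellorder})^('n::{finite,wellorder})"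
  assumes FFi: "F ** Fi = mat 1"
  shows "distr lborel borel (\<lambda>x. F *v x) = density lborel (\<lambda>_. ennreal (1 / \<bar>det F\<bar>))"
proof -
  have dF: "det F \<noteq> 0" using arg_cong[OF FFi, of det] by (auto simp: det_mul)
  have "density lborel (\<lambda>_. ennreal (1 / \<bar>det F\<bar>))
      = density (density (distr lborel borel (\<lambda>x. F *v x)) (\<lambda>_. ennreal \<bar>det F\<bar>)) (\<lambda>_. ennreal (1 / \<bar>det F\<bar>))"
    using lborel_lin_aux[OF FFi] by (rule arg_cong[where f="\<lambda>M. density M (\<lambda>_. ennreal (1 / \<bar>det F\<bar>))"])
  also have "\<dots> = density (distr lborel borel (\<lambda>x. F *v x)) (\<lambda>_. ennreal \<bar>det F\<bar> * ennreal (1 / \<bar>det F\<bar>))"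
    by (rule density_density_eq) auto
  also have "(\<lambda>_::(real,'n) vec. ennreal \<bar>det F\<bar> * ennreal (1 / \<bar>det F\<bar>)) = (\<lambda>_. 1)"
    using dF by (simp add: ennreal_mult'[symmetric])
  finally show ?thesis by (simp add: density_1)
qed

lemma gd_borel[measurable]: "(\<lambda>x. gaussian_density C x) \<in> borel_measurable borel"
  unfolding gaussian_density_def
  by (intro borel_measurable_times borel_measurable_const borel_measurable_continuous_onI
       continuous_intros linear_continuous_on matrix_vector_mul_bounded_linear) simp_all

lemma gd_borel2[measurable]: "(\<lambda>x. ennreal (gaussian_density C x)) \<in> borel_measurable borel"
  by measurable

lemma minv_one: "matrix_inv (mat 1 :: real^'n^'n) = mat 1"
  by (rule minv_eq) simp

lemma gauss_pointwise:
  fixes F Fi C :: "real^('n::{finite,wellorder})^('n::{finite,wellorder})"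
  assumes CF: "C = F ** transpose F" and FFi: "F ** Fi = mat 1"
  shows "gaussian_density C z = (1 / \<bar>det F\<bar>) * gaussian_density (mat 1) (Fi *v z)"
proof -
  have FiF: "Fi ** F = mat 1" using FFi matrix_left_right_inverse by blast
  have dF: "det F \<noteq> 0" using arg_cong[OF FFi, of det] by (auto simp: det_mul)
  have mi: "matrix_inv C = transpose Fi ** Fi"
  proof (rule minv_eq)
    have "C ** (transpose Fi ** Fi) = F ** (transpose F ** transpose Fi) ** Fi"
      by (simp add: CF matrix_mul_assoc)
    also have "transpose F ** transpose Fi = mat 1" by (metis FiF matrix_transpose_mul transpose_mat)
    finally show "C ** (transpose Fi ** Fi) = mat 1" by (simp add: FFi)
  qed
  have q: "z \<bullet> (matrix_inv C *v z) = (Fi *v z) \<bullet> (Fi *v z)"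
    by (simp add: mi dot_lmul_matrix[symmetric] flip: matrix_vector_mul_assoc) (simp add: inner_commute)
  have dC: "det C powr (-1/2) = 1 / \<bar>det F\<bar>"
  proof -
    have a: "\<bar>det F\<bar> powr 2 = \<bar>det F\<bar>^2" by (rule powr_numeral) simp
    have "det C = \<bar>det F\<bar> powr 2" unfolding a by (simp add: CF det_mul power2_eq_square)
    then have "det C powr (-1/2) = \<bar>det F\<bar> powr (2 * (-1/2))" by (subst powr_powr[symmetric]) (simp only:)
    also have "\<dots> = 1 / \<bar>det F\<bar>" using dF by (simp add: powr_minus_divide)
    finally show ?thesis .
  qed
  show ?thesis
    unfolding gaussian_density_def using dC q by (simp add: minv_one)
qed

lemma gaussian_lin:
  fixes F Fi C :: "real^('n::{finite,wellorder})^('n::{finite,wellorder})"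
  assumes CF: "C = F ** transpose F" and FFi: "F ** Fi = mat 1"
  shows "gaussian C = distr (gaussian (mat 1)) borel (\<lambda>x. F *v x)"
proof -
  have FiF: "Fi ** F = mat 1" using FFi matrix_left_right_inverse by blast
  let ?h = "\<lambda>z. ennreal (gaussian_density (mat 1) (Fi *v z))"
  have hm: "?h \<in> borel_measurable borel"
    using measurable_comp[OF mv_borel[of Fi] gd_borel2[of "mat 1"]] by (simp add: o_def)
  have "distr (gaussian (mat 1)) borel (\<lambda>x. F *v x) = distr (density lborel (\<lambda>x. ?h (F *v x))) borel (\<lambda>x. F *v x)"
    unfolding gaussian_def by (simp add: matrix_vector_mul_assoc FiF)
  also have "\<dots> = density (distr lborel borel (\<lambda>x. F *v x)) ?h"
    by (rule density_distr[symmetric]) (auto simp: hm mv_borel)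
  also have "\<dots> = density (density lborel (\<lambda>_. ennreal (1 / \<bar>det F\<bar>))) ?h"
    by (simp add: lborel_lin[OF FFi])
  also have "\<dots> = density lborel (\<lambda>z. ennreal (1 / \<bar>det F\<bar>) * ?h z)"
    by (rule density_density_eq) (auto simp: hm)
  also have "(\<lambda>z. ennreal (1 / \<bar>det F\<bar>) * ?h z) = (\<lambda>z. ennreal (gaussian_density C z))"
    by (rule ext) (simp add: gauss_pointwise[OF CF FFi] ennreal_mult'[symmetric])
  also have "density lborel \<dots> = gaussian C" unfolding gaussian_def ..
  finally show ?thesis ..
qed

lemma sets_gauss[simp, measurable_cong]: "sets (gaussian C) = sets borel"
  by (simp add: gaussian_def)

lemma space_gauss[simp]: "space (gaussian C) = UNIV"
  by (simp add: gaussian_def)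

lemma sf_gauss: "sigma_finite_measure (gaussian C)"
  unfolding gaussian_def
  by (subst sigma_finite_measure.sigma_finite_iff_density_finite[OF lborel.sigma_finite_measure_axioms]) auto

lemma psf_gauss: "product_sigma_finite (\<lambda>_::nat. gaussian C)"
  unfolding product_sigma_finite_def using sf_gauss by blast

lemma iid_lin:
  fixes F Fi C :: "real^('n::{finite,wellorder})^('n::{finite,wellorder})"
  assumes CF: "C = F ** transpose F" and FFi: "F ** Fi = mat 1"
  shows "distr (iid_sample S (mat 1)) (iid_sample S C) (\<lambda>Y. \<lambda>s\<in>{..<S}. F *v Y s) = iid_sample S C"
proof -
  interpret P: product_sigma_finite "\<lambda>_::nat. gaussian C" by (rule psf_gauss)
  interpret P1: product_sigma_finite "\<lambda>_::nat. gaussian (mat 1 :: ((real,'n) vec,'n) vec)" by (rule psf_gauss)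
  have Tm: "(\<lambda>Y. \<lambda>s\<in>{..<S}. F *v Y s) \<in> measurable (iid_sample S (mat 1)) (iid_sample S C)"
    unfolding iid_sample_def
  proof (rule measurable_restrict)
    fix s assume s: "s \<in> {..<S}"
    have "(\<lambda>Y. Y s) \<in> measurable (PiM {..<S} (\<lambda>_. gaussian (mat 1 :: ((real,'n) vec,'n) vec))) borel"
      using measurable_component_singleton[OF s, of "\<lambda>_. gaussian (mat 1 :: ((real,'n) vec,'n) vec)"]
      by (simp only: measurable_cong_sets[OF refl sets_gauss])
    then have "(\<lambda>Y. F *v Y s) \<in> measurable (PiM {..<S} (\<lambda>_. gaussian (mat 1 :: ((real,'n) vec,'n) vec))) borel"
      using measurable_compose[OF _ mv_borel] by blast
    then show "(\<lambda>Y. F *v Y s) \<in> measurable (PiM {..<S} (\<lambda>_. gaussian (mat 1 :: ((real,'n) vec,'n) vec))) (gaussian C)"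
      by (simp only: measurable_cong_sets[OF refl sets_gauss])
  qed
  show ?thesis
    unfolding iid_sample_def
  proof (rule P.PiM_eqI)
    fix A assume A: "\<And>i. i \<in> {..<S} \<Longrightarrow> A i \<in> sets (gaussian C)"
    have pre: "(\<lambda>Y. \<lambda>s\<in>{..<S}. F *v Y s) -` PiE {..<S} A \<inter> space (PiM {..<S} (\<lambda>_. gaussian (mat 1 :: ((real,'n) vec,'n) vec)))
        = PiE {..<S} (\<lambda>i. (\<lambda>x. F *v x) -` A i)"
      by (auto simp: space_PiM PiE_iff)
    have "emeasure (distr (PiM {..<S} (\<lambda>_. gaussian (mat 1 :: ((real,'n) vec,'n) vec))) (PiM {..<S} (\<lambda>_. gaussian C)) (\<lambda>Y. \<lambda>s\<in>{..<S}. F *v Y s)) (PiE {..<S} A)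
        = emeasure (PiM {..<S} (\<lambda>_. gaussian (mat 1 :: ((real,'n) vec,'n) vec))) (PiE {..<S} (\<lambda>i. (\<lambda>x. F *v x) -` A i))"
      using Tm A unfolding iid_sample_def
      by (subst emeasure_distr) (auto simp: pre intro!: sets_PiM_I_finite)
    also have "\<dots> = (\<Prod>i\<in>{..<S}. emeasure (gaussian (mat 1 :: ((real,'n) vec,'n) vec)) ((\<lambda>x. F *v x) -` A i))"
    proof (rule P1.emeasure_PiM)
      fix i assume i: "i \<in> {..<S}"
      have "A i \<in> sets borel" using A[OF i] by (simp only: sets_gauss)
      from measurable_sets_borel[OF mv_borel this, of F]
      show "(\<lambda>x. F *v x) -` A i \<in> sets (gaussian (mat 1 :: ((real,'n) vec,'n) vec))" by simp
    qed simp
    also have "\<dots> = (\<Prod>i\<in>{..<S}. emeasure (gaussian C) (A i))"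
    proof (rule prod.cong[OF refl])
      fix i assume i: "i \<in> {..<S}"
      have "emeasure (gaussian C) (A i) = emeasure (distr (gaussian (mat 1)) borel (\<lambda>x. F *v x)) (A i)"
        by (simp add: gaussian_lin[OF CF FFi])
      also have "\<dots> = emeasure (gaussian (mat 1 :: ((real,'n) vec,'n) vec)) ((\<lambda>x. F *v x) -` A i)"
      proof -
        have "A i \<in> sets borel" using A[OF i] by (simp only: sets_gauss)
        moreover have "(\<lambda>x. F *v x) \<in> measurable (gaussian (mat 1 :: ((real,'n) vec,'n) vec)) borel"
          using mv_borel by (simp only: measurable_cong_sets[OF sets_gauss refl])
        ultimately show ?thesis by (simp add: emeasure_distr)
      qed
      finally show "emeasure (gaussian (mat 1 :: ((real,'n) vec,'n) vec)) ((\<lambda>x. F *v x) -` A i) = emeasure (gaussian C) (A i)" ..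
    qed
    finally show "emeasure (distr (PiM {..<S} (\<lambda>_. gaussian (mat 1 :: ((real,'n) vec,'n) vec))) (PiM {..<S} (\<lambda>_. gaussian C)) (\<lambda>Y. \<lambda>s\<in>{..<S}. F *v Y s)) (PiE {..<S} A) = (\<Prod>i\<in>{..<S}. emeasure (gaussian C) (A i))" .
  qed simp_all
qed

lemma emeasure_iso:
  assumes T: "T \<in> measurable M N" and T': "T' \<in> measurable N M"
    and inv1: "\<And>x. x \<in> space M \<Longrightarrow> T' (T x) = x" and inv2: "\<And>y. y \<in> space N \<Longrightarrow> T (T' y) = y"
    and D: "distr M N T = N" and B: "B \<subseteq> space M"
  shows "emeasure N (T ` B) = emeasure M B"
proof -
  have eq1: "T ` B = T' -` B \<inter> space N"
  proof (intro set_eqI iffI)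
    fix y assume "y \<in> T ` B"
    then obtain x where x: "x \<in> B" "y = T x" by blast
    then show "y \<in> T' -` B \<inter> space N" using B inv1 measurable_space[OF T] by auto
  next
    fix y assume "y \<in> T' -` B \<inter> space N"
    then show "y \<in> T ` B" using inv2 by (metis IntE image_eqI vimageE)
  qed
  have eq2: "T -` (T ` B) \<inter> space M = B"
  proof (intro set_eqI iffI)
    fix x assume "x \<in> T -` (T ` B) \<inter> space M"
    then obtain b where "b \<in> B" "T x = T b" "x \<in> space M" by blast
    then show "x \<in> B" using inv1 B by (metis subsetD)
  next
    fix x assume "x \<in> B" then show "x \<in> T -` (T ` B) \<inter> space M" using B by auto
  qed
  show ?thesis
  proof (cases "B \<in> sets M")
    case True
    then have "T ` B \<in> sets N" unfolding eq1 using T' by (rule measurable_sets[rotated])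
    then have "emeasure N (T ` B) = emeasure (distr M N T) (T ` B)" by (simp add: D)
    also have "\<dots> = emeasure M B" using \<open>T ` B \<in> sets N\<close> T by (simp add: emeasure_distr eq2)
    finally show ?thesis .
  next
    case False
    have "T ` B \<notin> sets N"
    proof
      assume "T ` B \<in> sets N"
      then have "T -` (T ` B) \<inter> space M \<in> sets M" using T by (rule measurable_sets[rotated])
      then show False using False eq2 by simp
    qed
    then show ?thesis using False by (simp add: emeasure_notin_sets)
  qed
qed

lemma emeasure_Un_null2:
  assumes N: "N \<in> null_sets M" and X: "X \<inter> N = {}" and E: "E = {} \<or> E = N"
  shows "emeasure M (X \<union> E) = emeasure M X"
proof (cases "X \<in> sets M")
  case True then show ?thesis using E N by (auto simp: emeasure_Un_null_set)
next
  case False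
  have "X \<union> E \<notin> sets M"
  proof
    assume "X \<union> E \<in> sets M"
    then have "(X \<union> E) - N \<in> sets M" using N by auto
    moreover have "(X \<union> E) - N = X" using X E by auto
    ultimately show False using False by simp
  qed
  then show ?thesis using False by (simp add: emeasure_notin_sets)
qed

definition gramw :: "'n set \<Rightarrow> ('n \<Rightarrow> real^'m) \<Rightarrow> real^'n^'n" where
  "gramw K w = (\<chi> i j. if i \<in> K \<and> j \<in> K then w i \<bullet> w j else (if i = j then 1 else 0))"

lemma gramw_mv: "(gramw K w *v v) $ i = (if i \<in> K then w i \<bullet> (\<Sum>j\<in>K. v$j *\<^sub>R w j) else v$i)"
proof (cases "i \<in> K")
  case True
  have "(gramw K w *v v) $ i = (\<Sum>j\<in>UNIV. (if j \<in> K then w i \<bullet> w j else 0) * v$j)"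
    using True unfolding gramw_def matrix_vector_mult_def by (auto intro!: sum.cong)
  also have "\<dots> = (\<Sum>j\<in>UNIV. if j \<in> K then (w i \<bullet> w j) * v$j else 0)"
    by (rule sum.cong) auto
  also have "\<dots> = (\<Sum>j\<in>K. (w i \<bullet> w j) * v$j)"
    by (simp add: sum.If_cases)
  also have "\<dots> = w i \<bullet> (\<Sum>j\<in>K. v$j *\<^sub>R w j)"
    by (simp add: inner_sum_right mult.commute)
  finally show ?thesis using True by simp
next
  case False
  have "(gramw K w *v v) $ i = (\<Sum>j\<in>UNIV. (if i = j then 1 else 0) * v$j)"
    using False by (simp add: gramw_def matrix_vector_mult_def)
  also have "\<dots> = v$i" by (simp add: if_distrib[of "\<lambda>x. x * _"] cong: if_cong)
  finally show ?thesis using False by simp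
qed

lemma det0_ker:
  fixes A :: "real^'n^'n"
  shows "det A = 0 \<longleftrightarrow> (\<exists>v. v \<noteq> 0 \<and> A *v v = 0)"
  using invertible_det_nz[of A] invertible_left_inverse[of A] matrix_left_invertible_ker[of A]
  by blast

lemma gramw_L1:
  assumes "det (gramw K w) = 0"
  shows "\<exists>c. (\<exists>j\<in>K. c j \<noteq> 0) \<and> (\<Sum>j\<in>K. c j *\<^sub>R w j) = 0"
proof -
  obtain v where v: "v \<noteq> 0" "gramw K w *v v = 0" using assms det0_ker by blast
  define u where "u = (\<Sum>j\<in>K. v$j *\<^sub>R w j)"
  have out: "v$i = 0" if "i \<notin> K" for i
    using arg_cong[OF v(2), of "\<lambda>x. x$i"] that by (simp add: gramw_mv)
  have inn: "w i \<bullet> u = 0" if "i \<in> K" for i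
    using arg_cong[OF v(2), of "\<lambda>x. x$i"] that by (simp add: gramw_mv u_def)
  have "u \<bullet> u = (\<Sum>j\<in>K. v$j * (w j \<bullet> u))" by (simp add: u_def inner_sum_left)
  also have "\<dots> = 0" using inn by simp
  finally have u0: "u = 0" by simp
  obtain j where "v$j \<noteq> 0" using v(1) by (metis vec_eq_iff zero_index)
  then have "j \<in> K" using out by blast
  show ?thesis
    by (rule exI[of _ "\<lambda>j. v$j"]) (use \<open>v$j \<noteq> 0\<close> \<open>j \<in> K\<close> u0 u_def in auto)
qed

lemma gramw_L2:
  assumes "j0 \<in> K" "c j0 \<noteq> 0" "(\<Sum>j\<in>K. c j *\<^sub>R w j) = 0"
  shows "det (gramw K w) = 0"
proof -
  define v where "v = (\<chi> j. if j \<in> K then c j else 0)"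
  have "v \<noteq> 0" using assms(1,2) by (metis (mono_tags, lifting) v_def vec_lambda_beta zero_index)
  moreover have "gramw K w *v v = 0"
  proof -
    have "(\<Sum>j\<in>K. v$j *\<^sub>R w j) = (\<Sum>j\<in>K. c j *\<^sub>R w j)" by (rule sum.cong) (auto simp: v_def)
    then have e: "(\<Sum>j\<in>K. v$j *\<^sub>R w j) = 0" using assms(3) by simp
    have o: "v$i = 0" if "i \<notin> K" for i using that by (simp add: v_def)
    show ?thesis unfolding vec_eq_iff by (simp add: gramw_mv e o)
  qed
  ultimately show ?thesis using det0_ker by blast
qed

lemma gramw_step:
  assumes "k \<notin> K" "det (gramw (insert k K) w) = 0" "det (gramw K w) \<noteq> 0" "finite K"
  shows "w k \<in> span (w ` K)"
proof -
  obtain c where c: "\<exists>j\<in>insert k K. c j \<noteq> 0" "(\<Sum>j\<in>insert k K. c j *\<^sub>R w j) = 0"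
    using gramw_L1[OF assms(2)] by blast
  have sum: "c k *\<^sub>R w k + (\<Sum>j\<in>K. c j *\<^sub>R w j) = 0" using c(2) assms(1,4) by simp
  have ck: "c k \<noteq> 0"
  proof
    assume "c k = 0"
    then have "(\<Sum>j\<in>K. c j *\<^sub>R w j) = 0" using sum by simp
    moreover obtain j where "j \<in> K" "c j \<noteq> 0" using c(1) \<open>c k = 0\<close> by auto
    ultimately show False using gramw_L2 assms(3) by blast
  qed
  have "w k = (1 / c k) *\<^sub>R (c k *\<^sub>R w k)" using ck by simp
  also have "c k *\<^sub>R w k = - (\<Sum>j\<in>K. c j *\<^sub>R w j)" using sum by (simp add: eq_neg_iff_add_eq_0)
  also have "(1 / c k) *\<^sub>R - (\<Sum>j\<in>K. c j *\<^sub>R w j) = (- 1 / c k) *\<^sub>R (\<Sum>j\<in>K. c j *\<^sub>R w j)" by simp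
  also have "\<dots> \<in> span (w ` K)"
    by (intro span_scale span_sum span_base) auto
  finally show ?thesis .
qed

lemma gauss_null_span:
  fixes W :: "(real^('n::{finite,wellorder})) set"
  assumes "finite W" "card W < CARD('n)"
  shows "span W \<in> null_sets (gaussian C)"
proof -
  have "dim (span W) \<le> card W" by (rule dim_le_card) (auto simp: assms)
  then have "dim (span W) < DIM((real,'n) vec)" using assms by simp
  then have "negligible (span W)" by (rule negligible_lowdim)
  then have "span W \<in> null_sets lebesgue" by (simp add: negligible_iff_null_sets)
  moreover have sb: "span W \<in> sets borel" by (intro borel_closed closed_span)
  ultimately have nl: "span W \<in> null_sets lborel" by (simp add: null_sets_completion_iff)
  show ?thesis
    unfolding gaussian_def
    by (subst null_sets_density_iff) (use sb AE_not_in[OF nl] in \<open>auto elim: AE_mp\<close>)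
qed

definition gram :: "('n \<Rightarrow> nat) \<Rightarrow> 'n set \<Rightarrow> (nat \<Rightarrow> real^'m) \<Rightarrow> real^'n^'n" where
  "gram e K Y = gramw K (\<lambda>j. Y (e j))"

lemma gramw_cong: "(\<And>j. j \<in> K \<Longrightarrow> w j = w' j) \<Longrightarrow> gramw K w = gramw K w'"
  by (simp add: gramw_def cong: if_cong)

lemma gram_meas:
  assumes "e ` K \<subseteq> I"
  shows "(\<lambda>Y. det (gram e K Y)) \<in> borel_measurable (PiM I (\<lambda>_. gaussian C))"
proof -
  have comp: "(\<lambda>Y. Y (e i)) \<in> borel_measurable (PiM I (\<lambda>_. gaussian C))" if "i \<in> K" for i
  proof -
    have "e i \<in> I" using assms that by auto
    from measurable_component_singleton[OF this, of "\<lambda>_. gaussian C"]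
    show ?thesis by (simp only: measurable_cong_sets[OF refl sets_gauss])
  qed
  have ent: "(\<lambda>Y. gram e K Y $ i $ j) \<in> borel_measurable (PiM I (\<lambda>_. gaussian C))" for i j
  proof (cases "i \<in> K \<and> j \<in> K")
    case True
    then show ?thesis by (simp add: gram_def gramw_def borel_measurable_inner comp)
  next
    case False
    then show ?thesis
      by (subst measurable_cong[where g="\<lambda>_. if i = j then 1 else 0"]) (auto simp: gram_def gramw_def)
  qed
  show ?thesis
    unfolding det_def
    by (intro borel_measurable_sum borel_measurable_times borel_measurable_const borel_measurable_prod ent)
qed

lemma null_ind:
  fixes e :: "'n::{finite,wellorder} \<Rightarrow> nat"
  assumes inj: "inj e" and fin: "finite K"
  shows "\<forall>I. finite I \<longrightarrow> e ` K \<subseteq> I \<longrightarrow>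
    {Y \<in> space (PiM I (\<lambda>_. gaussian (mat 1 :: ((real,'n) vec,'n) vec))). det (gram e K Y) = 0}
      \<in> null_sets (PiM I (\<lambda>_. gaussian (mat 1 :: ((real,'n) vec,'n) vec)))"
  using fin
proof (induct K rule: finite_induct)
  case empty
  have "gram e {} Y = mat 1" for Y :: "nat \<Rightarrow> (real,'n) vec"
    by (simp add: gram_def gramw_def mat_def vec_eq_iff)
  then show ?case by simp
next
  case (insert k K)
  interpret P: product_sigma_finite "\<lambda>_::nat. gaussian (mat 1 :: ((real,'n) vec,'n) vec)"
    by (rule psf_gauss)
  let ?Mg = "gaussian (mat 1 :: ((real,'n) vec,'n) vec)"
  show ?case
  proof (intro allI impI)
    fix I :: "nat set" assume I: "finite I" "e ` insert k K \<subseteq> I"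
    define i where "i = e k"
    define I' where "I' = I - {i}"
    have iI: "i \<in> I" using I by (auto simp: i_def)
    have II: "I = insert i I'" "i \<notin> I'" "finite I'" using iI I by (auto simp: I'_def)
    have ne: "e j \<noteq> i" if "j \<in> K" for j using that insert(2) inj by (auto simp: i_def inj_eq)
    have KI': "e ` K \<subseteq> I'" using I ne by (auto simp: I'_def)
    define Z where "Z = {Y \<in> space (PiM I (\<lambda>_. ?Mg)). det (gram e (insert k K) Y) = 0}"
    define Z' where "Z' = {Y \<in> space (PiM I' (\<lambda>_. ?Mg)). det (gram e K Y) = 0}"
    have Zs: "Z \<in> sets (PiM I (\<lambda>_. ?Mg))"
    proof -
      have "Z = (\<lambda>Y. det (gram e (insert k K) Y)) -` {0} \<inter> space (PiM I (\<lambda>_. ?Mg))"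
        by (auto simp: Z_def)
      then show ?thesis using measurable_sets[OF gram_meas[OF I(2)], of "{0}"] by simp
    qed
    have Z'n: "Z' \<in> null_sets (PiM I' (\<lambda>_. ?Mg))" using insert(3) II(3) KI' by (simp add: Z'_def)
    then have Z's: "Z' \<in> sets (PiM I' (\<lambda>_. ?Mg))" by auto
    have cardK: "card K < CARD('n)"
    proof -
      have "card (insert k K) \<le> CARD('n)" by (rule card_mono) auto
      then show ?thesis using insert(1,2) by simp
    qed
    have pw: "(\<integral>\<^sup>+y. indicator Z (x(i := y)) \<partial>?Mg) \<le> \<infinity> * indicator Z' x"
      if x: "x \<in> space (PiM I' (\<lambda>_. ?Mg))" for x
    proof (cases "x \<in> Z'")
      case True then show ?thesis by simp
    next
      case False
      then have dx: "det (gram e K x) \<noteq> 0" using x by (simp add: Z'_def)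
      define V where "V = span ((\<lambda>j. x (e j)) ` K)"
      have le: "indicator Z (x(i := y)) \<le> (indicator V y :: ennreal)" for y
      proof (cases "x(i := y) \<in> Z")
        case True
        then have d0: "det (gramw (insert k K) (\<lambda>j. (x(i := y)) (e j))) = 0"
          by (simp add: Z_def gram_def)
        have "gramw K (\<lambda>j. (x(i := y)) (e j)) = gramw K (\<lambda>j. x (e j))"
          by (rule gramw_cong) (simp add: ne)
        then have d1: "det (gramw K (\<lambda>j. (x(i := y)) (e j))) \<noteq> 0" using dx by (simp add: gram_def)
        have "(\<lambda>j. (x(i := y)) (e j)) k \<in> span ((\<lambda>j. (x(i := y)) (e j)) ` K)"
          by (rule gramw_step[OF insert(2) d0 d1 insert(1)])
        moreover have "(\<lambda>j. (x(i := y)) (e j)) ` K = (\<lambda>j. x (e j)) ` K"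
          using ne by auto
        ultimately have "y \<in> V" by (simp add: V_def i_def)
        then show ?thesis by (simp add: indicator_def)
      qed simp
      have "V \<in> null_sets ?Mg" unfolding V_def
        by (rule gauss_null_span) (use cardK insert(1) card_image_le[of K "\<lambda>j. x (e j)"] in auto)
      then have "(\<integral>\<^sup>+y. indicator V y \<partial>?Mg) = 0"
        by (subst nn_integral_indicator) (auto dest: null_setsD2 simp: null_setsD1)
      moreover have "(\<integral>\<^sup>+y. indicator Z (x(i := y)) \<partial>?Mg) \<le> (\<integral>\<^sup>+y. indicator V y \<partial>?Mg)"
        by (rule nn_integral_mono) (rule le)
      ultimately show ?thesis by simp
    qed
    have "emeasure (PiM I (\<lambda>_. ?Mg)) Z = (\<integral>\<^sup>+Y. indicator Z Y \<partial>PiM I (\<lambda>_. ?Mg))"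
      using Zs by simp
    also have "\<dots> = (\<integral>\<^sup>+x. (\<integral>\<^sup>+y. indicator Z (x(i := y)) \<partial>?Mg) \<partial>PiM I' (\<lambda>_. ?Mg))"
      unfolding II(1) using Zs unfolding II(1)
      by (intro P.product_nn_integral_insert II borel_measurable_indicator)
    also have "\<dots> \<le> (\<integral>\<^sup>+x. \<infinity> * indicator Z' x \<partial>PiM I' (\<lambda>_. ?Mg))"
      by (rule nn_integral_mono) (rule pw)
    also have "\<dots> = \<infinity> * emeasure (PiM I' (\<lambda>_. ?Mg)) Z'"
      using Z's by (rule nn_integral_cmult_indicator)
    also have "\<dots> = 0" using Z'n by auto
    finally have "emeasure (PiM I (\<lambda>_. ?Mg)) Z = 0" by simp
    then show "{Y \<in> space (PiM I (\<lambda>_. ?Mg)). det (gram e (insert k K) Y) = 0} \<in> null_sets (PiM I (\<lambda>_. ?Mg))"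
      using Zs by (simp add: Z_def null_sets_def)
  qed
qed

lemma det_emp_meas:
  "(\<lambda>Y. det (emp_cov S Y)) \<in> borel_measurable (PiM {..<S} (\<lambda>_. gaussian (C::real^'n^'n)))"
proof -
  have comp: "(\<lambda>Y. Y s $ i) \<in> borel_measurable (PiM {..<S} (\<lambda>_. gaussian C))" if "s \<in> {..<S}" for s i
  proof -
    from measurable_component_singleton[OF that, of "\<lambda>_. gaussian C"]
    have "(\<lambda>Y. Y s) \<in> borel_measurable (PiM {..<S} (\<lambda>_. gaussian C))"
      by (simp only: measurable_cong_sets[OF refl sets_gauss])
    from measurable_compose[OF this borel_measurable_nth] show ?thesis .
  qed
  have ent: "(\<lambda>Y. emp_cov S Y $ i $ j) \<in> borel_measurable (PiM {..<S} (\<lambda>_. gaussian C))" for i j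
    unfolding ec_entry
    by (intro borel_measurable_times borel_measurable_const borel_measurable_sum comp)
  show ?thesis
    unfolding det_def
    by (intro borel_measurable_sum borel_measurable_times borel_measurable_const borel_measurable_prod ent)
qed

lemma sing_null:
  assumes "CARD('n::{finite,wellorder}) \<le> S"
  shows "{Y \<in> space (iid_sample S (mat 1 :: ((real,'n) vec,'n) vec)). det (emp_cov S Y) = 0}
           \<in> null_sets (iid_sample S (mat 1 :: ((real,'n) vec,'n) vec))"
proof -
  obtain h :: "'n \<Rightarrow> nat" where h: "bij_betw h UNIV {0..<CARD('n)}"
    using ex_bij_betw_finite_nat[of "UNIV::'n set"] by auto
  have inj: "inj h" using h by (simp add: bij_betw_def)
  have hS: "h ` UNIV \<subseteq> {..<S}" using h assms by (auto simp: bij_betw_def)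
  have Zn: "{Y \<in> space (iid_sample S (mat 1 :: ((real,'n) vec,'n) vec)). det (gram h UNIV Y) = 0}
           \<in> null_sets (iid_sample S (mat 1 :: ((real,'n) vec,'n) vec))"
    using null_ind[OF inj finite] hS unfolding iid_sample_def by blast
  have Ss: "{Y \<in> space (iid_sample S (mat 1 :: ((real,'n) vec,'n) vec)). det (emp_cov S Y) = 0}
           \<in> sets (iid_sample S (mat 1 :: ((real,'n) vec,'n) vec))"
  proof -
    have "{Y \<in> space (iid_sample S (mat 1 :: ((real,'n) vec,'n) vec)). det (emp_cov S Y) = 0}
      = (\<lambda>Y. det (emp_cov S Y)) -` {0} \<inter> space (iid_sample S (mat 1 :: ((real,'n) vec,'n) vec))" by auto
    then show ?thesis using measurable_sets[OF det_emp_meas, of "{0}" S "mat 1"]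
      by (simp add: iid_sample_def)
  qed
  have Spos: "0 < S" using assms by (metis finite_UNIV_card_ge_0 finite less_le_trans)
  have sub: "{Y \<in> space (iid_sample S (mat 1 :: ((real,'n) vec,'n) vec)). det (emp_cov S Y) = 0}
    \<subseteq> {Y \<in> space (iid_sample S (mat 1 :: ((real,'n) vec,'n) vec)). det (gram h UNIV Y) = 0}"
  proof safe
    fix Y :: "nat \<Rightarrow> (real,'n) vec"
    assume d: "det (emp_cov S Y) = 0"
    obtain v where v: "v \<noteq> 0" "emp_cov S Y *v v = 0" using d det0_ker by blast
    have "v \<bullet> (emp_cov S Y *v v) = 0" using v by simp
    then have "(\<Sum>s<S. (Y s \<bullet> v)^2) = 0" using Spos by (simp add: ec_quad)
    then have zs: "\<forall>s\<in>{..<S}. (Y s \<bullet> v)^2 = 0" by (subst sum_nonneg_eq_0_iff[symmetric]) auto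
    define R :: "((real,'n) vec,'n) vec" where "R = (\<chi> j. Y (h j))"
    have "R *v v = 0"
      using zs hS by (auto simp: vec_eq_iff R_def matrix_vector_mult_def inner_vec_def)
    then have dR: "det R = 0" using v det0_ker by blast
    have "gram h UNIV Y = R ** transpose R"
      by (simp add: vec_eq_iff gram_def gramw_def R_def matrix_matrix_mult_def transpose_def inner_vec_def)
    then show "det (gram h UNIV Y) = 0" by (simp add: det_mul dR)
  qed
  show ?thesis by (rule null_sets_subset[OF Zn Ss sub])
qed

lemma emp_cov_restrict: "emp_cov S (\<lambda>s\<in>{..<S}. h s) = emp_cov S h"
  unfolding emp_cov_def by (metis (no_types, lifting) lessThan_iff restrict_apply' sum.cong)

lemma T_meas:
  "(\<lambda>Y. \<lambda>s\<in>{..<S}. (F::real^'n^'n) *v Y s) \<in> measurable (iid_sample S C') (iid_sample S C)"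
  unfolding iid_sample_def
proof (rule measurable_restrict)
  fix s assume s: "s \<in> {..<S}"
  have "(\<lambda>Y. Y s) \<in> measurable (PiM {..<S} (\<lambda>_. gaussian C')) borel"
    using measurable_component_singleton[OF s, of "\<lambda>_. gaussian C'"]
    by (simp only: measurable_cong_sets[OF refl sets_gauss])
  then have "(\<lambda>Y. F *v Y s) \<in> measurable (PiM {..<S} (\<lambda>_. gaussian C')) borel"
    using measurable_compose[OF _ mv_borel] by blast
  then show "(\<lambda>Y. F *v Y s) \<in> measurable (PiM {..<S} (\<lambda>_. gaussian C')) (gaussian C)"
    by (simp only: measurable_cong_sets[OF refl sets_gauss])
qed

lemma space_iid: "space (iid_sample S C) = PiE {..<S} (\<lambda>_. UNIV)"
  by (simp add: iid_sample_def space_PiM)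

lemma T_inv:
  assumes "(G::real^'n^'n) ** F = mat 1" "Y \<in> space (iid_sample S C)"
  shows "(\<lambda>s\<in>{..<S}. G *v ((\<lambda>s\<in>{..<S}. F *v Y s) s)) = Y"
proof
  fix s
  show "(\<lambda>s\<in>{..<S}. G *v ((\<lambda>s\<in>{..<S}. F *v Y s) s)) s = Y s"
  proof (cases "s < S")
    case True then show ?thesis by (simp add: matrix_vector_mul_assoc assms(1))
  next
    case False then show ?thesis using assms(2) by (auto simp: space_iid PiE_def extensional_def)
  qed
qed

lemma chol_false:
  fixes A :: "real^('n::{finite,wellorder})^('n::{finite,wellorder})"
  assumes "det A = 0"
  shows "cholesky A = (THE L::real^('n::{finite,wellorder})^('n::{finite,wellorder}). False)"
proof -
  have "(\<lambda>L. cholP A L) = (\<lambda>_. False)"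
  proof (rule ext)
    fix L :: "real^('n::{finite,wellorder})^('n::{finite,wellorder})"
    show "cholP A L = False"
    proof
      assume c: "cholP A L"
      then have "det L = prod (\<lambda>i. L$i$i) UNIV" by (intro det_lowerdiagonal) (auto simp: cholP_def)
      moreover have "0 < prod (\<lambda>i. L$i$i) UNIV" using c by (intro prod_pos) (auto simp: cholP_def)
      ultimately have "det L \<noteq> 0" by linarith
      moreover have "det A = det L * det L" using c by (auto simp: cholP_def det_mul)
      ultimately show False using assms by simp
    qed simp
  qed
  then show ?thesis by (simp add: cholesky_alt)
qed

lemma minv_false:
  fixes A :: "real^'n^'n"
  assumes "det A = 0"
  shows "matrix_inv A = (SOME B::real^'n^'n. False)"
proof -
  have "(\<lambda>B. A ** B = mat 1 \<and> B ** A = mat 1) = (\<lambda>_. False)"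
  proof (rule ext)
    fix B :: "real^'n^'n"
    show "(A ** B = mat 1 \<and> B ** A = mat 1) = False"
      using assms by (metis det_I det_mul mult_zero_left zero_neq_one)
  qed
  then show ?thesis by (simp add: matrix_inv_def)
qed

theorem lemma2:
  fixes C :: "real^('n::{finite,wellorder})^('n::{finite,wellorder})" and S :: nat
  assumes "spd C"
    and "S \<ge> CARD('n)"
  shows "distr (iid_sample S C) borel
           (\<lambda>X. kappa (precond (cholesky (emp_cov S X)) C))
       = distr (iid_sample S (mat 1)) borel
           (\<lambda>Y :: nat \<Rightarrow> real^('n::{finite,wellorder}). kappa (matrix_inv (emp_cov S Y)))"
proof -
  define F where "F = cholesky C"
  have cP: "cholP C F" unfolding F_def by (rule cholesky_spd[OF assms(1)])
  have CF: "C = F ** transpose F" using cP by (simp add: cholP_def)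
  have "det F = prod (\<lambda>i. F$i$i) UNIV" using cP by (intro det_lowerdiagonal) (auto simp: cholP_def)
  moreover have "0 < prod (\<lambda>i. F$i$i) UNIV" using cP by (intro prod_pos) (auto simp: cholP_def)
  ultimately have "det F \<noteq> 0" by linarith
  then obtain Fi where FFi: "F ** Fi = mat 1"
    using invertible_det_nz invertible_right_inverse by blast
  have FiF: "Fi ** F = mat 1" using FFi matrix_left_right_inverse by blast
  define PI where "PI = iid_sample S (mat 1 :: ((real,'n) vec,'n) vec)"
  define PC where "PC = iid_sample S C"
  define T where "T = (\<lambda>Y::nat \<Rightarrow> (real,'n) vec. \<lambda>s\<in>{..<S}. F *v Y s)"
  define T' where "T' = (\<lambda>Y::nat \<Rightarrow> (real,'n) vec. \<lambda>s\<in>{..<S}. Fi *v Y s)"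
  have Tm: "T \<in> measurable PI PC" unfolding T_def PI_def PC_def by (rule T_meas)
  have T'm: "T' \<in> measurable PC PI" unfolding T'_def PI_def PC_def by (rule T_meas)
  have inv1: "T' (T Y) = Y" if "Y \<in> space PI" for Y
    using T_inv[OF FiF that[unfolded PI_def]] by (simp add: T_def T'_def)
  have inv2: "T (T' Y) = Y" if "Y \<in> space PC" for Y
    using T_inv[OF FFi that[unfolded PC_def]] by (simp add: T_def T'_def)
  have D: "distr PI PC T = PC" unfolding PI_def PC_def T_def by (rule iid_lin[OF CF FFi])
  define N where "N = {Y \<in> space PI. det (emp_cov S Y) = 0}"
  have Nn: "N \<in> null_sets PI" unfolding N_def PI_def by (rule sing_null[OF assms(2)])
  have NPI: "N \<subseteq> space PI" by (auto simp: N_def)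
  define f where "f = (\<lambda>X::nat \<Rightarrow> (real,'n) vec. kappa (precond (cholesky (emp_cov S X)) C))"
  define g where "g = (\<lambda>Y::nat \<Rightarrow> (real,'n) vec. kappa (matrix_inv (emp_cov S Y)))"
  define a0 where "a0 = kappa (precond (THE L::((real,'n) vec,'n) vec. False) C)"
  define b0 where "b0 = kappa (SOME B::((real,'n) vec,'n) vec. False)"
  have ecT: "emp_cov S (T Y) = F ** emp_cov S Y ** transpose F" for Y
    by (simp add: T_def emp_cov_restrict ec_congr)
  have fg: "f (T Y) = g Y" if "Y \<notin> N" "Y \<in> space PI" for Y
  proof -
    have "det (emp_cov S Y) \<noteq> 0" using that by (simp add: N_def)
    from pointwise[OF CF FFi this] show ?thesis
      by (simp add: f_def g_def T_def emp_cov_restrict)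
  qed
  have fa: "f (T Y) = a0" if "Y \<in> N" for Y
  proof -
    have "det (emp_cov S Y) = 0" using that by (simp add: N_def)
    then have "det (emp_cov S (T Y)) = 0" by (simp add: ecT det_mul)
    then show ?thesis by (simp add: f_def a0_def chol_false)
  qed
  have gb: "g Y = b0" if "Y \<in> N" for Y
  proof -
    have "det (emp_cov S Y) = 0" using that by (simp add: N_def)
    then show ?thesis by (simp add: g_def b0_def minv_false)
  qed
  have key: "emeasure PC (f -` A \<inter> space PC) = emeasure PI (g -` A \<inter> space PI)" for A
  proof -
    define B1 where "B1 = (\<lambda>Y. f (T Y)) -` A \<inter> space PI"
    have eqC: "f -` A \<inter> space PC = T ` B1"
    proof (intro set_eqI iffI)
      fix X assume X: "X \<in> f -` A \<inter> space PC"
      then have "T' X \<in> space PI" using measurable_space[OF T'm] by auto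
      moreover have "f (T (T' X)) \<in> A" using X inv2 by auto
      ultimately have "T' X \<in> B1" by (simp add: B1_def)
      then show "X \<in> T ` B1" using inv2 X by (metis IntE image_eqI)
    next
      fix X assume "X \<in> T ` B1"
      then obtain Y where "Y \<in> B1" "X = T Y" by blast
      then show "X \<in> f -` A \<inter> space PC" using measurable_space[OF Tm] by (auto simp: B1_def)
    qed
    have "emeasure PC (f -` A \<inter> space PC) = emeasure PI B1"
      unfolding eqC by (rule emeasure_iso[OF Tm T'm inv1 inv2 D]) (auto simp: B1_def)
    define X0 where "X0 = {Y \<in> space PI - N. g Y \<in> A}"
    have X0N: "X0 \<inter> N = {}" by (auto simp: X0_def)
    have b1: "B1 = X0 \<union> (if a0 \<in> A then N else {})"
    proof (intro set_eqI)
      fix Y show "Y \<in> B1 \<longleftrightarrow> Y \<in> X0 \<union> (if a0 \<in> A then N else {})"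
        by (cases "Y \<in> N") (use NPI fg fa in \<open>auto simp: B1_def X0_def\<close>)
    qed
    have b2: "g -` A \<inter> space PI = X0 \<union> (if b0 \<in> A then N else {})"
      using NPI gb by (auto simp: X0_def)
    have "emeasure PI B1 = emeasure PI X0"
      unfolding b1 by (rule emeasure_Un_null2[OF Nn X0N]) auto
    also have "\<dots> = emeasure PI (g -` A \<inter> space PI)"
      unfolding b2 by (rule emeasure_Un_null2[OF Nn X0N, symmetric]) auto
    finally show ?thesis using \<open>emeasure PC (f -` A \<inter> space PC) = emeasure PI B1\<close> by simp
  qed
  have "distr PC borel f = distr PI borel g"
    unfolding distr_def by (simp only: key)
  then show ?thesis by (simp add: PC_def PI_def f_def g_def)
qed

end
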